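(* Let $E$ be a Banach space over $\mathbb C_p$ and let $c_0(E)$ be the Banach space of sequences $x=(x_0,x_1,x_2,\ldots)$ with $x_j\in E$ and $\|x_j\|_E\to0$, normed by $\|x\|=\sup_{j\ge0}\|x_j\|_E$. Let $T_E$ be the backward shift on $c_0(E)$, $T_E(x_0,x_1,x_2,\ldots)=(x_1,x_2,\ldots)$. Let $A$ be a bounded linear operator on $E$ with $\|A\|\le1$ such that $\|A^nu\|_E\to0$ as $n\to\infty$ for every $u\in E$. Then there exist a closed subspace $Y\subset c_0(E)$ invariant under $T_E$ and a surjective linear isometry $W:E\to Y$ such that $A=W^{-1}T_E^YW$, where $T_E^Y$ denotes the restriction of $T_E$ to $Y$.
   Context: $p$ is a prime and $\mathbb C_p$ is the completion of an algebraic closure of the $p$-adic field $\mathbb Q_p$ with respect to the extension of the $p$-adic absolute value; Banach spaces over $\mathbb C_p$ are non-Archimedean (norm satisfying the ultrametric inequality). *)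

theory Defs
  imports "HOL-Computational_Algebra.Computational_Algebra"
begin

definition nonarch_abs :: "('k::field \<Rightarrow> real) \<Rightarrow> bool" where
  "nonarch_abs absv \<longleftrightarrow>
     (\<forall>x. 0 \<le> absv x) \<and> (\<forall>x. absv x = 0 \<longleftrightarrow> x = 0) \<and>
     (\<forall>x y. absv (x * y) = absv x * absv y) \<and>
     (\<forall>x y. absv (x + y) \<le> max (absv x) (absv y))"

definition padic_val_rat :: "nat \<Rightarrow> rat \<Rightarrow> int" where
  "padic_val_rat p q =
     int (multiplicity (int p) (fst (quotient_of q))) - int (multiplicity (int p) (snd (quotient_of q)))"

definition padic_abs_rat :: "nat \<Rightarrow> rat \<Rightarrow> real" where
  "padic_abs_rat p q = (if q = 0 then 0 else real p powr (- real_of_int (padic_val_rat p q)))"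

definition algebraic_over_rat :: "'k::field_char_0 \<Rightarrow> bool" where
  "algebraic_over_rat x \<longleftrightarrow> (\<exists>q :: rat poly. q \<noteq> 0 \<and> poly (map_poly of_rat q) x = 0)"

text \<open>(K, absv) is (isometrically isomorphic to) C_p: a complete, algebraically closed
  valued field whose absolute value restricts to the p-adic one on Q and in which the
  elements algebraic over Q (= an algebraic closure of Q_p inside K) are dense,
  i.e. K is the completion of an algebraic closure of Q_p.\<close>
definition is_Cp :: "nat \<Rightarrow> ('k::field_char_0 \<Rightarrow> real) \<Rightarrow> bool" where
  "is_Cp p absv \<longleftrightarrow>
     prime p \<and> nonarch_abs absv \<and>
     (\<forall>q. absv (of_rat q) = padic_abs_rat p q) \<and>
     (\<forall>X :: nat \<Rightarrow> 'k. (\<forall>e>0. \<exists>N. \<forall>m\<ge>N. \<forall>n\<ge>N. absv (X m - X n) < e)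
          \<longrightarrow> (\<exists>L. (\<lambda>n. absv (X n - L)) \<longlonglongrightarrow> 0)) \<and>
     (\<forall>f :: 'k poly. 0 < degree f \<longrightarrow> (\<exists>x. poly f x = 0)) \<and>
     (\<forall>x. \<forall>e>0. \<exists>y. algebraic_over_rat y \<and> absv (x - y) < e)"

definition vector_space_ax :: "('k::field \<Rightarrow> 'e::ab_group_add \<Rightarrow> 'e) \<Rightarrow> bool" where
  "vector_space_ax smul \<longleftrightarrow>
     (\<forall>a x y. smul a (x + y) = smul a x + smul a y) \<and>
     (\<forall>a b x. smul (a + b) x = smul a x + smul b x) \<and>
     (\<forall>a b x. smul a (smul b x) = smul (a * b) x) \<and>
     (\<forall>x. smul 1 x = x)"

definition nonarch_banach ::
  "('k::field \<Rightarrow> real) \<Rightarrow> ('k \<Rightarrow> 'e::ab_group_add \<Rightarrow> 'e) \<Rightarrow> ('e \<Rightarrow> real) \<Rightarrow> bool" where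
  "nonarch_banach absv smul nrm \<longleftrightarrow>
     vector_space_ax smul \<and>
     (\<forall>x. 0 \<le> nrm x) \<and> (\<forall>x. nrm x = 0 \<longleftrightarrow> x = 0) \<and>
     (\<forall>a x. nrm (smul a x) = absv a * nrm x) \<and>
     (\<forall>x y. nrm (x + y) \<le> max (nrm x) (nrm y)) \<and>
     (\<forall>X :: nat \<Rightarrow> 'e. (\<forall>e>0. \<exists>N. \<forall>m\<ge>N. \<forall>n\<ge>N. nrm (X m - X n) < e)
          \<longrightarrow> (\<exists>L. (\<lambda>n. nrm (X n - L)) \<longlonglongrightarrow> 0))"

definition linear_map ::
  "('k \<Rightarrow> 'e::ab_group_add \<Rightarrow> 'e) \<Rightarrow> ('k \<Rightarrow> 'f::ab_group_add \<Rightarrow> 'f) \<Rightarrow> ('e \<Rightarrow> 'f) \<Rightarrow> bool" where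
  "linear_map smulE smulF A \<longleftrightarrow>
     (\<forall>x y. A (x + y) = A x + A y) \<and> (\<forall>a x. A (smulE a x) = smulF a (A x))"

definition bounded_op :: "('e \<Rightarrow> real) \<Rightarrow> ('e \<Rightarrow> 'e) \<Rightarrow> bool" where
  "bounded_op nrm A \<longleftrightarrow> (\<exists>c\<ge>0. \<forall>u. nrm (A u) \<le> c * nrm u)"

definition op_norm :: "('e \<Rightarrow> real) \<Rightarrow> ('e \<Rightarrow> 'e) \<Rightarrow> real" where
  "op_norm nrm A = Inf {c. 0 \<le> c \<and> (\<forall>u. nrm (A u) \<le> c * nrm u)}"

definition c0 :: "('e \<Rightarrow> real) \<Rightarrow> (nat \<Rightarrow> 'e) set" where
  "c0 nrm = {x. (\<lambda>j. nrm (x j)) \<longlonglongrightarrow> 0}"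

definition c0_norm :: "('e \<Rightarrow> real) \<Rightarrow> (nat \<Rightarrow> 'e) \<Rightarrow> real" where
  "c0_norm nrm x = (SUP j. nrm (x j))"

definition c0_smul :: "('k \<Rightarrow> 'e \<Rightarrow> 'e) \<Rightarrow> 'k \<Rightarrow> (nat \<Rightarrow> 'e) \<Rightarrow> (nat \<Rightarrow> 'e)" where
  "c0_smul smul a x = (\<lambda>j. smul a (x j))"

definition backward_shift :: "(nat \<Rightarrow> 'e) \<Rightarrow> (nat \<Rightarrow> 'e)" where
  "backward_shift x = (\<lambda>j. x (Suc j))"

definition linear_into_c0 ::
  "('k \<Rightarrow> 'e::ab_group_add \<Rightarrow> 'e) \<Rightarrow> ('e \<Rightarrow> (nat \<Rightarrow> 'e)) \<Rightarrow> bool" where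
  "linear_into_c0 smul W \<longleftrightarrow>
     (\<forall>x y. W (x + y) = (\<lambda>j. W x j + W y j)) \<and> (\<forall>a x. W (smul a x) = c0_smul smul a (W x))"

definition closed_subspace_c0 ::
  "('k \<Rightarrow> 'e::ab_group_add \<Rightarrow> 'e) \<Rightarrow> ('e \<Rightarrow> real) \<Rightarrow> (nat \<Rightarrow> 'e) set \<Rightarrow> bool" where
  "closed_subspace_c0 smul nrm Y \<longleftrightarrow>
     Y \<subseteq> c0 nrm \<and> (\<lambda>j. 0) \<in> Y \<and>
     (\<forall>x\<in>Y. \<forall>y\<in>Y. (\<lambda>j. x j + y j) \<in> Y) \<and> (\<forall>a. \<forall>x\<in>Y. c0_smul smul a x \<in> Y) \<and>
     (\<forall>ys x. (\<forall>k. ys k \<in> Y) \<and> x \<in> c0 nrm \<and> (\<lambda>k. c0_norm nrm (\<lambda>j. ys k j - x j)) \<longlonglongrightarrow> 0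
            \<longrightarrow> x \<in> Y)"

end

theory Submission
  imports Defs
begin

lemma smul_zero_left:
  assumes "vector_space_ax smul"
  shows "smul 0 b = (0::'e::ab_group_add)"
proof -
  have "smul (0 + 0) b = smul 0 b + smul 0 b" using assms unfolding vector_space_ax_def by blast
  then show ?thesis by simp
qed

lemma smul_neg_one:
  assumes "vector_space_ax smul"
  shows "smul (-1) b = - (b::'e::ab_group_add)"
proof -
  have "smul (-1 + 1) b = smul (-1) b + smul 1 b" using assms unfolding vector_space_ax_def by blast
  also have "smul 1 b = b" using assms unfolding vector_space_ax_def by blast
  finally have "smul (-1) b + b = 0" using smul_zero_left[OF assms] by simp
  then show ?thesis by (simp add: eq_neg_iff_add_eq_0)
qed

lemma absv_one:
  assumes "nonarch_abs (absv::'k::field \<Rightarrow> real)"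
  shows "absv 1 = 1" "absv (-1) = 1"
proof -
  have a: "absv (1*1) = absv 1 * absv 1" using assms unfolding nonarch_abs_def by blast
  have "absv 1 \<noteq> 0" using assms unfolding nonarch_abs_def by auto
  with a show "absv 1 = 1" by simp
  moreover have "absv ((-1)*(-1)) = absv (-1) * absv (-1)" using assms unfolding nonarch_abs_def by blast
  ultimately have "absv (-1) * absv (-1) = 1" by simp
  moreover have "absv (-1) \<ge> 0" using assms unfolding nonarch_abs_def by blast
  ultimately show "absv (-1) = 1"
    by (metis abs_of_nonneg abs_square_eq_1 power2_eq_square)
qed

lemma nrm_neg:
  assumes "nonarch_banach absv smul nrm" "nonarch_abs absv"
  shows "nrm (- b) = nrm b"
proof -
  have v: "vector_space_ax smul" using assms unfolding nonarch_banach_def by blast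
  have "nrm (smul (-1) b) = absv (-1) * nrm b" using assms unfolding nonarch_banach_def by blast
  then show ?thesis using smul_neg_one[OF v] absv_one[OF assms(2)] by simp
qed

lemma nrm_diff:
  assumes "nonarch_banach absv smul nrm" "nonarch_abs absv"
  shows "nrm (a - b) \<le> max (nrm a) (nrm b)"
proof -
  have "nrm (a + - b) \<le> max (nrm a) (nrm (-b))" using assms(1) unfolding nonarch_banach_def by blast
  then show ?thesis using nrm_neg[OF assms] by simp
qed

lemma nrm_tri:
  assumes "nonarch_banach absv smul nrm"
  shows "nrm (a - c) \<le> max (nrm (a - b)) (nrm (b - c))"
proof -
  have "nrm ((a - b) + (b - c)) \<le> max (nrm (a - b)) (nrm (b - c))"
    using assms unfolding nonarch_banach_def by blast
  then show ?thesis by simp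
qed

lemma pow_add:
  assumes "linear_map smul smul A"
  shows "(A ^^ n) (x + y) = (A ^^ n) x + (A ^^ n) y"
  using assms by (induction n) (auto simp: linear_map_def)

lemma pow_smul:
  assumes "linear_map smul smul A"
  shows "(A ^^ n) (smul a x) = smul a ((A ^^ n) x)"
  using assms by (induction n) (auto simp: linear_map_def)

lemma pow_diff:
  fixes A :: "'e::ab_group_add \<Rightarrow> 'e"
  assumes "linear_map smul smul A"
  shows "(A ^^ n) (x - y) = (A ^^ n) x - (A ^^ n) y"
proof -
  have "(A ^^ n) ((x - y) + y) = (A ^^ n) (x - y) + (A ^^ n) y" by (rule pow_add[OF assms])
  then show ?thesis by (simp add: eq_diff_eq)
qed

lemma pow_zero:
  fixes A :: "'e::ab_group_add \<Rightarrow> 'e"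
  assumes "linear_map smul smul A"
  shows "(A ^^ n) 0 = 0"
  using pow_diff[OF assms, of n 0 0] by simp

lemma A_contr:
  assumes "nonarch_banach absv smul nrm" "linear_map smul smul A"
    "bounded_op nrm A" "op_norm nrm A \<le> 1"
  shows "nrm (A u) \<le> nrm u"
proof (cases "nrm u = 0")
  case True
  then have "u = 0" using assms(1) unfolding nonarch_banach_def by blast
  then have "A u = 0" using pow_zero[OF assms(2), of 1] by simp
  then have "nrm (A u) = 0" using assms(1) unfolding nonarch_banach_def by blast
  moreover have "0 \<le> nrm u" using assms(1) unfolding nonarch_banach_def by blast
  ultimately show ?thesis by simp
next
  case False
  let ?S = "{c. 0 \<le> c \<and> (\<forall>u. nrm (A u) \<le> c * nrm u)}"
  have pos: "nrm u > 0" using False assms(1) unfolding nonarch_banach_def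
    by (metis order_le_less)
  have ne: "?S \<noteq> {}" using assms(3) unfolding bounded_op_def by blast
  have "nrm (A u) / nrm u \<le> Inf ?S"
  proof (rule cInf_greatest[OF ne])
    fix c assume "c \<in> ?S"
    then have "nrm (A u) \<le> c * nrm u" by blast
    then show "nrm (A u) / nrm u \<le> c" using pos by (simp add: divide_le_eq)
  qed
  also have "\<dots> \<le> 1" using assms(4) unfolding op_norm_def .
  finally show ?thesis using pos by (simp add: divide_le_eq)
qed

lemma pow_contr:
  assumes "nonarch_banach absv smul nrm" "linear_map smul smul A"
    "bounded_op nrm A" "op_norm nrm A \<le> 1"
  shows "nrm ((A ^^ n) u) \<le> nrm u"
proof (induction n)
  case 0 then show ?case by simp
next
  case (Suc n)
  have "nrm (A ((A ^^ n) u)) \<le> nrm ((A ^^ n) u)" by (rule A_contr[OF assms])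
  then show ?case using Suc by simp
qed

lemma conv_bdd:
  assumes "(f::nat \<Rightarrow> real) \<longlonglongrightarrow> 0"
  shows "\<exists>B. \<forall>j. f j \<le> B"
proof -
  have "Bseq f" using assms by (intro convergent_imp_Bseq) (auto simp: convergent_def)
  then obtain K where "\<And>n. norm (f n) \<le> K" by (metis BseqE)
  then show ?thesis by (metis abs_le_D1 real_norm_def)
qed

theorem theorem3:
  fixes p :: nat
    and absv :: "'k::field_char_0 \<Rightarrow> real"
    and smul :: "'k \<Rightarrow> 'e::ab_group_add \<Rightarrow> 'e"
    and nrm :: "'e \<Rightarrow> real"
    and A :: "'e \<Rightarrow> 'e"
  assumes "is_Cp p absv"
    and "nonarch_banach absv smul nrm"
    and "linear_map smul smul A"
    and "bounded_op nrm A"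
    and "op_norm nrm A \<le> 1"
    and "\<forall>u. (\<lambda>n. nrm ((A ^^ n) u)) \<longlonglongrightarrow> 0"
  shows "\<exists>Y W. closed_subspace_c0 smul nrm Y \<and> backward_shift ` Y \<subseteq> Y \<and>
           linear_into_c0 smul W \<and> bij_betw W UNIV Y \<and>
           (\<forall>u. c0_norm nrm (W u) = nrm u) \<and>
           (\<forall>u. A u = inv_into UNIV W (backward_shift (W u)))"
proof -
  have B: "nonarch_banach absv smul nrm" by fact
  have L: "linear_map smul smul A" by fact
  have na: "nonarch_abs absv" using assms(1) unfolding is_Cp_def by blast
  have nn: "\<And>x. 0 \<le> nrm x" and nz: "\<And>x. nrm x = 0 \<longleftrightarrow> x = 0"
    using B unfolding nonarch_banach_def by auto
  have contr: "\<And>n u. nrm ((A ^^ n) u) \<le> nrm u" by (rule pow_contr[OF assms(2-5)])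
  define W where "W = (\<lambda>u j. (A ^^ j) u)"
  define Y where "Y = range W"
  have inj: "inj W"
  proof (rule injI)
    fix x y assume "W x = W y"
    then have "W x 0 = W y 0" by simp
    then show "x = y" by (simp add: W_def)
  qed
  have Wc0: "W u \<in> c0 nrm" for u using assms(6) by (simp add: c0_def W_def)
  have Wadd: "W (x + y) = (\<lambda>j. W x j + W y j)" for x y
    by (simp add: W_def pow_add[OF L])
  have Wsmul: "W (smul a x) = c0_smul smul a (W x)" for a x
    by (simp add: W_def c0_smul_def pow_smul[OF L])
  have Wshift: "backward_shift (W u) = W (A u)" for u
    by (simp add: W_def backward_shift_def funpow_Suc_right del: funpow.simps)
  have Wnorm: "c0_norm nrm (W u) = nrm u" for u
  proof (rule antisym)
    show "c0_norm nrm (W u) \<le> nrm u" unfolding c0_norm_def W_def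
      by (rule cSUP_least) (auto simp: contr)
    have "bdd_above (range (\<lambda>j. nrm (W u j)))"
      by (rule bdd_aboveI2[where M="nrm u"]) (auto simp: W_def contr)
    then have "nrm (W u 0) \<le> c0_norm nrm (W u)" unfolding c0_norm_def
      by (rule cSUP_upper2) auto
    then show "nrm u \<le> c0_norm nrm (W u)" by (simp add: W_def)
  qed
  have closed: "closed_subspace_c0 smul nrm Y"
    unfolding closed_subspace_c0_def
  proof (intro conjI ballI allI impI)
    show "Y \<subseteq> c0 nrm" using Wc0 by (auto simp: Y_def)
    show "(\<lambda>j. 0) \<in> Y" unfolding Y_def
      by (rule range_eqI[of _ _ 0]) (simp add: W_def pow_zero[OF L])
    fix x y assume "x \<in> Y" "y \<in> Y"
    then obtain a b where ab: "x = W a" "y = W b" unfolding Y_def by blast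
    have "(\<lambda>j. x j + y j) = W (a + b)" by (simp add: ab Wadd)
    then show "(\<lambda>j. x j + y j) \<in> Y" unfolding Y_def by simp
  next
    fix a x assume "x \<in> Y"
    then obtain b where b: "x = W b" unfolding Y_def by blast
    have "c0_smul smul a x = W (smul a b)" by (simp add: b Wsmul)
    then show "c0_smul smul a x \<in> Y" unfolding Y_def by simp
  next
    fix ys x
    assume h: "(\<forall>k. ys k \<in> Y) \<and> x \<in> c0 nrm \<and> (\<lambda>k. c0_norm nrm (\<lambda>j. ys k j - x j)) \<longlonglongrightarrow> 0"
    define u where "u k = inv_into UNIV W (ys k)" for k
    have u: "ys k = W (u k)" for k using h unfolding Y_def u_def by (simp add: f_inv_into_f)
    have xc: "(\<lambda>j. nrm (x j)) \<longlonglongrightarrow> 0" using h by (simp add: c0_def)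
    have lim: "(\<lambda>k. c0_norm nrm (\<lambda>j. ys k j - x j)) \<longlonglongrightarrow> 0" using h by blast
    have le: "nrm (ys k j - x j) \<le> c0_norm nrm (\<lambda>j. ys k j - x j)" for k j
    proof -
      obtain B1 where B1: "\<And>j. nrm (ys k j) \<le> B1"
        using conv_bdd[of "\<lambda>j. nrm (ys k j)"] Wc0 u by (auto simp: c0_def)
      obtain B2 where B2: "\<And>j. nrm (x j) \<le> B2" using conv_bdd[OF xc] by blast
      have "bdd_above (range (\<lambda>j. nrm (ys k j - x j)))"
      proof (rule bdd_aboveI2[where M="max B1 B2"])
        fix j
        show "nrm (ys k j - x j) \<le> max B1 B2" using nrm_diff[OF B na, of "ys k j" "x j"] B1[of j] B2[of j]
          by linarith
      qed
      then show ?thesis unfolding c0_norm_def by (rule cSUP_upper[OF UNIV_I])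
    qed
    define v where "v = x 0"
    have "x j = (A ^^ j) v" for j
    proof -
      have bound: "nrm (x j - (A ^^ j) v) \<le> c0_norm nrm (\<lambda>j. ys k j - x j)" for k
      proof -
        have "nrm (x j - (A ^^ j) v) \<le> max (nrm (x j - ys k j)) (nrm (ys k j - (A ^^ j) v))"
          by (rule nrm_tri[OF B])
        moreover have "nrm (x j - ys k j) = nrm (ys k j - x j)"
          using nrm_neg[OF B na, of "ys k j - x j"] by simp
        moreover have "nrm (ys k j - (A ^^ j) v) \<le> nrm (u k - v)"
          using contr[of j "u k - v"] by (simp add: u W_def pow_diff[OF L])
        moreover have "nrm (u k - v) \<le> c0_norm nrm (\<lambda>j. ys k j - x j)"
          using le[of k 0] by (simp add: u W_def v_def)
        ultimately show ?thesis using le[of k j] by linarith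
      qed
      have "nrm (x j - (A ^^ j) v) \<le> 0"
        using bound by (intro tendsto_lowerbound[OF lim always_eventually]) simp_all
      then show ?thesis using nn[of "x j - (A ^^ j) v"] nz[of "x j - (A ^^ j) v"] by simp
    qed
    then have "x = W v" by (auto simp: W_def)
    then show "x \<in> Y" by (simp add: Y_def)
  qed
  have sh: "backward_shift ` Y \<subseteq> Y"
  proof
    fix z assume "z \<in> backward_shift ` Y"
    then obtain u where "z = backward_shift (W u)" unfolding Y_def by blast
    then have "z = W (A u)" using Wshift by simp
    then show "z \<in> Y" unfolding Y_def by blast
  qed
  have lin: "linear_into_c0 smul W" unfolding linear_into_c0_def by (intro conjI allI Wadd Wsmul)
  have bij: "bij_betw W UNIV Y" unfolding Y_def bij_betw_def using inj by (intro conjI refl)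
  have conj: "A u = inv_into UNIV W (backward_shift (W u))" for u
  proof -
    have "inv_into UNIV W (W (A u)) = A u" by (rule inv_into_f_f[OF inj]) (rule UNIV_I)
    then show ?thesis unfolding Wshift by (rule sym)
  qed
  show ?thesis
    by (intro exI[of _ Y] exI[of _ W] conjI allI closed sh lin bij Wnorm conj)
qed

end
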